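(* Let $k\ge1$, let $M=\Gamma(\mathbb Z\,\overrightarrow{\times}\,G,(k,0))$ with $G$ a Dedekind $\sigma$-complete $\ell$-group, and let $F:\mathbb R^2\to M$ be a two-dimensional spectral resolution. Then for each $i\in\{1,\ldots,k\}$ with $T_i\neq\emptyset$, $T_i$ has at most $k-i+1$ characteristic points; consequently $F$ has at most $k(k+1)/2$ characteristic points.
   Context: $\mathbb Z\,\overrightarrow{\times}\,G$ is $\mathbb Z\times G$ with lexicographic order; $\Gamma(K,v)=([0,v];\oplus,',0,v)$ with $a\oplus b=(a+b)\wedge v$. A two-dimensional spectral resolution is $F:\mathbb R^2\to M$ such that: $F$ is monotone; $\bigvee_{(s,t)}F(s,t)=1$; $F(s,t)=\bigvee_{(s',t')\ll(s,t)}F(s',t')$; $\bigwedge_sF(s,t)=0=\bigwedge_tF(s,t)$; $0\le F(b_1,b_2)-F(a_1,b_2)-F(b_1,a_2)+F(a_1,a_2)\le1$ for $a_i\le b_i$ (in the group). $M_j=\{(j,g)\in M\}$, $T_j=\{(s,t)\colon F(s,t)\in M_j\}$. For $i\ge1$ and $(s,t)\in T_i$, $\pi_i(s,t)=(\inf\{r\colon(r,t)\in T_i\},\inf\{r\colon(s,r)\in T_i\})$; characteristic points of $T_i$ are the $\pi_i(s,t)$, $(s,t)\in T_i$; characteristic points of $F$ are those of the $T_i$, $i\ge1$. *)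

theory Defs
  imports Complex_Main "HOL-Library.Lattice_Algebras" "HOL-Library.Countable_Set"
begin

definition dedekind_sigma_complete :: "'g::lattice_ab_group_add itself \<Rightarrow> bool" where
  "dedekind_sigma_complete _ \<longleftrightarrow>
     (\<forall>S::'g set. countable S \<and> S \<noteq> {} \<and> bdd_above S \<longrightarrow>
        (\<exists>s. (\<forall>x\<in>S. x \<le> s) \<and> (\<forall>u. (\<forall>x\<in>S. x \<le> u) \<longrightarrow> s \<le> u)))"

definition lex_le :: "int \<times> 'g::lattice_ab_group_add \<Rightarrow> int \<times> 'g \<Rightarrow> bool" where
  "lex_le x y \<longleftrightarrow> fst x < fst y \<or> (fst x = fst y \<and> snd x \<le> snd y)"

definition lex_add :: "int \<times> 'g::lattice_ab_group_add \<Rightarrow> int \<times> 'g \<Rightarrow> int \<times> 'g" where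
  "lex_add x y = (fst x + fst y, snd x + snd y)"

definition lex_diff :: "int \<times> 'g::lattice_ab_group_add \<Rightarrow> int \<times> 'g \<Rightarrow> int \<times> 'g" where
  "lex_diff x y = (fst x - fst y, snd x - snd y)"

definition unitv :: "nat \<Rightarrow> int \<times> 'g::lattice_ab_group_add" where
  "unitv k = (int k, 0)"

definition GammaM :: "nat \<Rightarrow> (int \<times> 'g::lattice_ab_group_add) set" where
  "GammaM k = {x. lex_le (0, 0) x \<and> lex_le x (unitv k)}"

definition is_sup_M :: "nat \<Rightarrow> (int \<times> 'g::lattice_ab_group_add) set \<Rightarrow> int \<times> 'g \<Rightarrow> bool" where
  "is_sup_M k S x \<longleftrightarrow> x \<in> GammaM k \<and> (\<forall>y\<in>S. lex_le y x) \<and>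
      (\<forall>z\<in>GammaM k. (\<forall>y\<in>S. lex_le y z) \<longrightarrow> lex_le x z)"

definition is_inf_M :: "nat \<Rightarrow> (int \<times> 'g::lattice_ab_group_add) set \<Rightarrow> int \<times> 'g \<Rightarrow> bool" where
  "is_inf_M k S x \<longleftrightarrow> x \<in> GammaM k \<and> (\<forall>y\<in>S. lex_le x y) \<and>
      (\<forall>z\<in>GammaM k. (\<forall>y\<in>S. lex_le z y) \<longrightarrow> lex_le z x)"

definition spectral_resolution2 :: "nat \<Rightarrow> (real \<Rightarrow> real \<Rightarrow> int \<times> 'g::lattice_ab_group_add) \<Rightarrow> bool" where
  "spectral_resolution2 k F \<longleftrightarrow>
     (\<forall>s t. F s t \<in> GammaM k) \<and>
     (\<forall>s t s' t'. s \<le> s' \<and> t \<le> t' \<longrightarrow> lex_le (F s t) (F s' t')) \<and>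
     is_sup_M k {F s t | s t. True} (unitv k) \<and>
     (\<forall>s t. is_sup_M k {F s' t' | s' t'. s' < s \<and> t' < t} (F s t)) \<and>
     (\<forall>t. is_inf_M k {F s t | s. True} (0, 0)) \<and>
     (\<forall>s. is_inf_M k {F s t | t. True} (0, 0)) \<and>
     (\<forall>a1 a2 b1 b2. a1 \<le> b1 \<and> a2 \<le> b2 \<longrightarrow>
        (let D = lex_add (lex_diff (lex_diff (F b1 b2) (F a1 b2)) (F b1 a2)) (F a1 a2)
         in lex_le (0, 0) D \<and> lex_le D (unitv k)))"

(* T_j = {(s,t). F(s,t) \<in> M_j} *)
definition Tset :: "(real \<Rightarrow> real \<Rightarrow> int \<times> 'g) \<Rightarrow> int \<Rightarrow> (real \<times> real) set" where
  "Tset F j = {(s, t). fst (F s t) = j}"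

definition proj_pi :: "(real \<Rightarrow> real \<Rightarrow> int \<times> 'g) \<Rightarrow> int \<Rightarrow> real \<times> real \<Rightarrow> real \<times> real" where
  "proj_pi F i p = (Inf {r. (r, snd p) \<in> Tset F i}, Inf {r. (fst p, r) \<in> Tset F i})"

definition char_points_T :: "(real \<Rightarrow> real \<Rightarrow> int \<times> 'g) \<Rightarrow> int \<Rightarrow> (real \<times> real) set" where
  "char_points_T F i = proj_pi F i ` Tset F i"

definition char_points :: "(real \<Rightarrow> real \<Rightarrow> int \<times> 'g) \<Rightarrow> (real \<times> real) set" where
  "char_points F = (\<Union>i\<in>{i. i \<ge> 1}. char_points_T F i)"

end

theory Submission
  imports Defs
begin

lemma inf_eq_real:
  fixes X Y :: "real set"
  assumes "s \<in> X" "s \<in> Y" "bdd_below X" "bdd_below Y"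
    and "\<And>r. r \<le> s \<Longrightarrow> r \<in> X \<longleftrightarrow> r \<in> Y"
  shows "Inf X = Inf Y"
proof -
  have *: "Inf A \<le> Inf B" if "s \<in> A" "s \<in> B" "bdd_below A"
      "\<And>r. r \<le> s \<Longrightarrow> r \<in> B \<Longrightarrow> r \<in> A" for A B :: "real set"
  proof (rule cInf_greatest)
    show "B \<noteq> {}" using that by auto
    fix y assume y: "y \<in> B"
    show "Inf A \<le> y"
    proof (cases "y \<le> s")
      case True then show ?thesis using that y by (intro cInf_lower) auto
    next
      case False
      have "Inf A \<le> s" using that by (intro cInf_lower) auto
      then show ?thesis using False by linarith
    qed
  qed
  show ?thesis using *[of X Y] *[of Y X] assms by force
qed

definition pa :: "(real \<Rightarrow> real \<Rightarrow> int) \<Rightarrow> int \<Rightarrow> real \<Rightarrow> real" where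
  "pa f i t = Inf {r. f r t = i}"
definition pb :: "(real \<Rightarrow> real \<Rightarrow> int) \<Rightarrow> int \<Rightarrow> real \<Rightarrow> real" where
  "pb f i s = Inf {r. f s r = i}"

lemma comp_lemma:
  fixes f :: "real \<Rightarrow> real \<Rightarrow> int"
  assumes mono: "\<And>s t s' t'. s \<le> s' \<Longrightarrow> t \<le> t' \<Longrightarrow> f s t \<le> f s' t'"
    and super: "\<And>a1 a2 b1 b2. a1 \<le> b1 \<Longrightarrow> a2 \<le> b2 \<Longrightarrow> f a1 b2 + f b1 a2 \<le> f b1 b2 + f a1 a2"
    and g1: "\<And>t. \<exists>s. f s t = 0" and g2: "\<And>s. \<exists>t. f s t = 0"
    and i: "1 \<le> i"
    and h: "f s t = i" "f s' t' = i" "s \<le> s'" "t \<le> t'"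
  shows "pa f i t = pa f i t' \<and> pb f i s = pb f i s'"
proof -
  have bdd1: "bdd_below {r. f r u = i}" for u
  proof -
    obtain r0 where r0: "f r0 u = 0" using g1 by blast
    show ?thesis
    proof (rule bdd_belowI[of _ r0])
      fix r assume "r \<in> {r. f r u = i}"
      then have "f r u = i" by simp
      show "r0 \<le> r"
      proof (rule ccontr)
        assume "\<not> r0 \<le> r"
        then have "f r u \<le> f r0 u" using mono by simp
        then show False using r0 \<open>f r u = i\<close> i by simp
      qed
    qed
  qed
  have bdd2: "bdd_below {r. f u r = i}" for u
  proof -
    obtain r0 where r0: "f u r0 = 0" using g2 by blast
    show ?thesis
    proof (rule bdd_belowI[of _ r0])
      fix r assume "r \<in> {r. f u r = i}"
      then have "f u r = i" by simp
      show "r0 \<le> r"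
      proof (rule ccontr)
        assume "\<not> r0 \<le> r"
        then have "f u r \<le> f u r0" using mono by simp
        then show False using r0 \<open>f u r = i\<close> i by simp
      qed
    qed
  qed
  have m: "f s t' = i"
    using mono[of s s t t'] mono[of s s' t' t'] h by simp
  have "pa f i t = pa f i t'"
    unfolding pa_def
  proof (rule inf_eq_real[of s])
    show "s \<in> {r. f r t = i}" "s \<in> {r. f r t' = i}" using h m by auto
    show "bdd_below {r. f r t = i}" "bdd_below {r. f r t' = i}" using bdd1 by auto
    fix r assume r: "r \<le> s"
    have a: "f r t \<le> f r t'" "f r t' \<le> f s t'" "f r t \<le> f s t"
      using mono[of r r t t'] mono[of r s t' t'] mono[of r s t t] r h by auto
    have b: "f r t' + f s t \<le> f s t' + f r t" using super[of r s t t'] r h by simp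
    show "r \<in> {r. f r t = i} \<longleftrightarrow> r \<in> {r. f r t' = i}" using a b h m by auto
  qed
  moreover have "pb f i s = pb f i s'"
    unfolding pb_def
  proof (rule inf_eq_real[of t'])
    show "t' \<in> {r. f s r = i}" "t' \<in> {r. f s' r = i}" using h m by auto
    show "bdd_below {r. f s r = i}" "bdd_below {r. f s' r = i}" using bdd2 by auto
    fix r assume r: "r \<le> t'"
    have a: "f s r \<le> f s' r" "f s' r \<le> f s' t'" "f s r \<le> f s t'"
      using mono[of s s' r r] mono[of s' s' r t'] mono[of s s r t'] r h by auto
    have b: "f s t' + f s' r \<le> f s' t' + f s r" using super[of s s' r t'] r h by simp
    show "r \<in> {r. f s r = i} \<longleftrightarrow> r \<in> {r. f s' r = i}" using a b h m by auto
  qed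
  ultimately show ?thesis by simp
qed

lemma count_lemma:
  fixes f :: "real \<Rightarrow> real \<Rightarrow> int" and P :: "real \<times> real \<Rightarrow> 'b"
  assumes mono: "\<And>s t s' t'. s \<le> s' \<Longrightarrow> t \<le> t' \<Longrightarrow> f s t \<le> f s' t'"
    and super: "\<And>a1 a2 b1 b2. a1 \<le> b1 \<Longrightarrow> a2 \<le> b2 \<Longrightarrow> f a1 b2 + f b1 a2 \<le> f b1 b2 + f a1 a2"
    and comp: "\<And>s t s' t'. f s t = i \<Longrightarrow> f s' t' = i \<Longrightarrow> s \<le> s' \<Longrightarrow> t \<le> t' \<Longrightarrow> P (s,t) = P (s',t')"
  shows "finite R \<Longrightarrow> R \<noteq> {} \<Longrightarrow> R \<subseteq> {p. f (fst p) (snd p) = i} \<Longrightarrow> inj_on P R \<Longrightarrow> card R = n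
     \<Longrightarrow> i + int n - 1 \<le> f (Max (fst ` R)) (Max (snd ` R))"
proof (induction n arbitrary: R)
  case 0 then show ?case by auto
next
  case (Suc n)
  have fin: "finite (fst ` R)" "fst ` R \<noteq> {}" using Suc.prems by auto
  obtain p where p: "p \<in> R" "fst p = Max (fst ` R)"
    using Max_in[OF fin] by auto
  define R' where "R' = R - {p}"
  have cR': "card R' = n" using Suc.prems p unfolding R'_def by simp
  have fp: "f (fst p) (snd p) = i" using Suc.prems p by auto
  show ?case
  proof (cases "R' = {}")
    case True
    then have "R = {p}" using p unfolding R'_def by auto
    then show ?thesis using cR' True fp by simp
  next
    case False
    have finR': "finite R'" using Suc.prems unfolding R'_def by auto
    have IH: "i + int n - 1 \<le> f (Max (fst ` R')) (Max (snd ` R'))"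
      using Suc.IH[of R'] finR' False Suc.prems cR' unfolding R'_def
      by (auto intro: inj_on_subset)
    have key: "fst x < fst p \<and> snd p < snd x" if x: "x \<in> R'" for x
    proof -
      have xR: "x \<in> R" "x \<noteq> p" using x unfolding R'_def by auto
      have fx: "f (fst x) (snd x) = i" using Suc.prems xR by auto
      have le: "fst x \<le> fst p" using p xR fin by auto
      have "P x \<noteq> P p" using Suc.prems(4) xR p by (meson inj_on_def)
      then have nc: "\<not> (fst x \<le> fst p \<and> snd x \<le> snd p)" "\<not> (fst p \<le> fst x \<and> snd p \<le> snd x)"
        using comp[of "fst x" "snd x" "fst p" "snd p"] comp[of "fst p" "snd p" "fst x" "snd x"] fx fp
        by auto
      show ?thesis using nc le by auto
    qed
    have finS: "finite (snd ` R')" "snd ` R' \<noteq> {}" using finR' False by auto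
    define T where "T = Max (snd ` R')"
    have snd_le: "snd p < T"
    proof -
      obtain x where "x \<in> R'" using False by auto
      then have "snd p < snd x" "snd x \<le> T" using key finS unfolding T_def by auto
      then show ?thesis by simp
    qed
    have RR: "R = insert p R'" using p unfolding R'_def by auto
    have MT: "Max (snd ` R) = T"
      unfolding RR T_def using finS snd_le unfolding T_def by (simp add: max_def)
    have MS: "Max (fst ` R) = fst p" using p by simp
    have finF: "finite (fst ` R')" "fst ` R' \<noteq> {}" using finR' False by auto
    obtain q where q: "q \<in> R'" "fst q = Max (fst ` R')" using Max_in[OF finF] by auto
    have qk: "fst q < fst p" "snd p < snd q" using key[OF q(1)] by auto
    have qT: "snd q \<le> T" using q finS unfolding T_def by auto
    have fq: "f (fst q) (snd q) = i" using Suc.prems q unfolding R'_def by auto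
    have sup: "f (fst q) T + f (fst p) (snd p) \<le> f (fst p) T + f (fst q) (snd p)"
      using super[of "fst q" "fst p" "snd p" T] qk snd_le by simp
    have small: "f (fst q) (snd p) \<le> i - 1"
    proof -
      have "f (fst q) (snd p) \<le> i" using mono[of "fst q" "fst p" "snd p" "snd p"] qk fp by simp
      moreover have "f (fst q) (snd p) \<noteq> i"
      proof
        assume e: "f (fst q) (snd p) = i"
        have "P (fst q, snd p) = P (fst p, snd p)" using comp[OF e fp] qk by simp
        moreover have "P (fst q, snd p) = P (fst q, snd q)" using comp[OF e fq] qk by simp
        ultimately have "P p = P q" by simp
        moreover have "p \<in> R" "q \<in> R" "p \<noteq> q" using p q unfolding R'_def by auto
        ultimately show False using Suc.prems(4) by (meson inj_on_def)
      qed
      ultimately show ?thesis by simp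
    qed
    have "i + int n - 1 \<le> f (fst q) T" using IH q unfolding T_def by simp
    then have "i + int n \<le> f (fst p) T" using sup small fp by linarith
    then show ?thesis unfolding MT MS by simp
  qed
qed

lemma ground_lemma:
  fixes g :: "real \<Rightarrow> int \<times> 'g::lattice_ab_group_add"
  assumes k: "k \<ge> 1" and inf: "is_inf_M k {g x | x. True} (0,0)" and rng: "\<And>x. g x \<in> GammaM k"
  shows "\<exists>x. fst (g x) = 0"
proof (rule ccontr)
  assume "\<not> ?thesis"
  then have pos: "fst (g x) \<ge> 1" for x using rng[of x] by (force simp: GammaM_def lex_le_def)
  have lb: "lex_le z (0,0)" if "z \<in> GammaM k" "\<And>x. lex_le z (g x)" for z
    using inf that unfolding is_inf_M_def by blast
  have nopos: "h \<le> 0" if "0 \<le> h" for h :: 'g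
  proof -
    have "(0,h) \<in> GammaM k" using k that by (auto simp: GammaM_def lex_le_def unitv_def)
    moreover have "lex_le (0,h) (g x)" for x using pos[of x] by (auto simp: lex_le_def)
    ultimately have "lex_le (0,h) (0,0)" using lb by blast
    then show ?thesis by (simp add: lex_le_def)
  qed
  have "(1::int,0::'g) \<in> GammaM k" using k by (auto simp: GammaM_def lex_le_def unitv_def)
  moreover have "lex_le (1::int,0::'g) (g x)" for x
  proof -
    have "sup 0 (- snd (g x)) \<le> 0" by (rule nopos) simp
    then have "- snd (g x) \<le> 0" by (meson order_trans sup_ge2)
    then have "0 \<le> snd (g x)" by simp
    then show ?thesis using pos[of x] by (auto simp: lex_le_def)
  qed
  ultimately have "lex_le (1::int,0::'g) (0,0)" using lb by blast
  then show False by (simp add: lex_le_def)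
qed

lemma gauss_aux: "(\<Sum>i\<in>{1..int k}. nat (int k - i + 1)) = k * (k + 1) div 2"
proof -
  have "(\<Sum>i\<in>{1..int k}. nat (int k - i + 1)) = (\<Sum>j\<in>{0..<k}. nat (int k - (int k - int j) + 1))"
  proof (rule sum.reindex_bij_witness[of _ "\<lambda>i. int k - int i" "\<lambda>i. nat (int k - i)"])
  qed auto
  also have "\<dots> = (\<Sum>j<k. Suc j)" by (intro sum.cong) auto
  also have "\<dots> = k * (k + 1) div 2" by (induction k) auto
  finally show ?thesis .
qed

theorem theorem4p10:
  fixes k :: nat and F :: "real \<Rightarrow> real \<Rightarrow> int \<times> 'g::lattice_ab_group_add"
  assumes "k \<ge> 1"
    and "dedekind_sigma_complete TYPE('g)"
    and "spectral_resolution2 k F"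
  shows "(\<forall>i::int. 1 \<le> i \<and> i \<le> int k \<and> Tset F i \<noteq> {} \<longrightarrow>
            finite (char_points_T F i) \<and> card (char_points_T F i) \<le> nat (int k - i + 1))
         \<and> finite (char_points F) \<and> card (char_points F) \<le> k * (k + 1) div 2"
proof -
  define f where "f = (\<lambda>s t. fst (F s t))"
  have SR: "\<forall>s t. F s t \<in> GammaM k"
     "\<forall>s t s' t'. s \<le> s' \<and> t \<le> t' \<longrightarrow> lex_le (F s t) (F s' t')"
     "\<forall>t. is_inf_M k {F s t | s. True} (0, 0)"
     "\<forall>s. is_inf_M k {F s t | t. True} (0, 0)"
     "\<forall>a1 a2 b1 b2. a1 \<le> b1 \<and> a2 \<le> b2 \<longrightarrow>
        (let D = lex_add (lex_diff (lex_diff (F b1 b2) (F a1 b2)) (F b1 a2)) (F a1 a2)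
         in lex_le (0, 0) D \<and> lex_le D (unitv k))"
    using assms(3) unfolding spectral_resolution2_def by blast+
  have rng: "0 \<le> f s t \<and> f s t \<le> int k" for s t
  proof -
    have "F s t \<in> GammaM k" using SR(1) by blast
    then show ?thesis unfolding f_def by (auto simp: GammaM_def lex_le_def unitv_def)
  qed
  have mono: "\<And>s t s' t'. s \<le> s' \<Longrightarrow> t \<le> t' \<Longrightarrow> f s t \<le> f s' t'"
    using SR(2) unfolding f_def lex_le_def by force
  have super: "\<And>a1 a2 b1 b2. a1 \<le> b1 \<Longrightarrow> a2 \<le> b2 \<Longrightarrow> f a1 b2 + f b1 a2 \<le> f b1 b2 + f a1 a2"
  proof -
    fix a1 a2 b1 b2 :: real assume "a1 \<le> b1" "a2 \<le> b2"
    then have "lex_le (0, 0) (lex_add (lex_diff (lex_diff (F b1 b2) (F a1 b2)) (F b1 a2)) (F a1 a2))"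
      using SR(5) unfolding Let_def by blast
    then show "f a1 b2 + f b1 a2 \<le> f b1 b2 + f a1 a2"
      unfolding f_def lex_le_def lex_add_def lex_diff_def by auto
  qed
  have g1: "\<And>t. \<exists>s. f s t = 0"
  proof -
    fix t show "\<exists>s. f s t = 0"
      using ground_lemma[of k "\<lambda>s. F s t"] assms(1) SR(1,3) unfolding f_def by auto
  qed
  have g2: "\<And>s. \<exists>t. f s t = 0"
  proof -
    fix s show "\<exists>t. f s t = 0"
      using ground_lemma[of k "\<lambda>t. F s t"] assms(1) SR(1,4) unfolding f_def by auto
  qed
  have T: "Tset F i = {p. f (fst p) (snd p) = i}" for i
    unfolding Tset_def f_def by auto
  have PI: "proj_pi F i p = (pa f i (snd p), pb f i (fst p))" for i p
    unfolding proj_pi_def Tset_def pa_def pb_def f_def by simp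
  define P where "P i = (\<lambda>p. (pa f i (snd p), pb f i (fst p)))" for i
  have C: "char_points_T F i = P i ` {p. f (fst p) (snd p) = i}" for i
  proof -
    have "proj_pi F i = P i" by (rule ext) (simp only: PI P_def)
    then show ?thesis unfolding char_points_T_def T by simp
  qed
  have bound: "finite (char_points_T F i) \<and> card (char_points_T F i) \<le> nat (int k - i + 1)"
    if i: "1 \<le> i" for i
  proof -
    have cmp: "\<And>s t s' t'. f s t = i \<Longrightarrow> f s' t' = i \<Longrightarrow> s \<le> s' \<Longrightarrow> t \<le> t' \<Longrightarrow> P i (s,t) = P i (s',t')"
    proof -
      fix s t s' t' :: real
      assume h: "f s t = i" "f s' t' = i" "s \<le> s'" "t \<le> t'"
      have "pa f i t = pa f i t' \<and> pb f i s = pb f i s'"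
        by (rule comp_lemma[OF mono super g1 g2 i h])
      then show "P i (s,t) = P i (s',t')" unfolding P_def by simp
    qed
    have sub: "card S \<le> nat (int k - i + 1)" if S: "finite S" "S \<subseteq> char_points_T F i" for S
    proof (cases "S = {}")
      case True then show ?thesis by simp
    next
      case False
      obtain R where R: "R \<subseteq> {p. f (fst p) (snd p) = i}" "inj_on (P i) R" "S = P i ` R"
        using S(2) unfolding C subset_image_inj by blast
      have finR: "finite R" using R S(1) finite_image_iff by blast
      have cR: "card R = card S" using R card_image by metis
      have "i + int (card R) - 1 \<le> f (Max (fst ` R)) (Max (snd ` R))"
        using count_lemma[OF mono super cmp finR _ R(1) R(2) refl] False R(3) by blast
      then show ?thesis using rng[of "Max (fst ` R)" "Max (snd ` R)"] cR by linarith
    qed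
    have fin: "finite (char_points_T F i)"
    proof (rule ccontr)
      assume "\<not> ?thesis"
      then obtain S where "finite S" "card S = Suc (nat (int k - i + 1))" "S \<subseteq> char_points_T F i"
        using infinite_arbitrarily_large by blast
      then show False using sub by fastforce
    qed
    then show ?thesis using sub by blast
  qed
  have empty: "char_points_T F i = {}" if "i > int k" for i
  proof -
    have "f (fst p) (snd p) \<noteq> i" for p using rng[of "fst p" "snd p"] that by linarith
    then show ?thesis unfolding C by auto
  qed
  have CP: "char_points F = (\<Union>i\<in>{1..int k}. char_points_T F i)"
    unfolding char_points_def
  proof (intro equalityI subsetI)
    fix x assume "x \<in> (\<Union>i\<in>{i. 1 \<le> i}. char_points_T F i)"
    then obtain i where i: "1 \<le> i" "x \<in> char_points_T F i" by blast
    then have "i \<le> int k" using empty by (metis empty_iff not_le)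
    then show "x \<in> (\<Union>i\<in>{1..int k}. char_points_T F i)" using i by auto
  next
    fix x assume "x \<in> (\<Union>i\<in>{1..int k}. char_points_T F i)"
    then show "x \<in> (\<Union>i\<in>{i. 1 \<le> i}. char_points_T F i)" by auto
  qed
  have finCP: "finite (char_points F)" unfolding CP using bound by auto
  have "card (char_points F) \<le> (\<Sum>i\<in>{1..int k}. card (char_points_T F i))"
    unfolding CP by (rule card_UN_le) simp
  also have "\<dots> \<le> (\<Sum>i\<in>{1..int k}. nat (int k - i + 1))"
    by (rule sum_mono) (use bound in auto)
  also have "\<dots> = k * (k + 1) div 2" by (rule gauss_aux)
  finally show ?thesis using bound finCP by auto
qed

end
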